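(* Consider a single-core non-preemptive server of capacity $f>0$ and tasks $1,\dots,N$, all available at time $0$, task $a$ requiring $\alpha_a$ CPU cycles with deadline $\beta_a$. Let $\mathbf{s}$ be an optimal ordered set without any outages, of size $M$, and let $\mathbf{s}'$ be the ordered set, of size $P$, produced by the Optimal Job Scheduling algorithm; $\mathbf{s}'$ has no outages. Then $\mathbf{s}'$ is an optimal ordered set and $P=M$.
   Context: An ordered set is a sequence of distinct tasks executed back-to-back from time $0$; the task in position $l$ completes at $\frac1f\sum_{k=1}^{l}\alpha_{s(k)}$ and is in outage if this exceeds its deadline. An optimal ordered set is an ordered set with no outage of maximum cardinality. Optimal Job Scheduling algorithm: let $\mathbf{c}=[c(1),\dots,c(N)]$ be the ordering of $[1:N]$ by nondecreasing $\alpha$ (ties broken by nonincreasing $\beta$) and $\mathbf{b}=[b(1),\dots,b(N)]$ the ordering of $[1:N]$ by nondecreasing $\beta$ (ties broken by nondecreasing $\alpha$). Initialize $\mathbf{q}=[q(1),\dots,q(N)]=\mathbf 0$ (entry $0$ denotes an empty slot, with $\alpha_0=0$). For $i=1,\dots,N$: find $i^*$ with $b(i^* )=c(i)$ and set $q(i^* )\gets b(i^* )$; if for some $j\in[i^*:N]$ with $q(j)\neq0$ we have $\sum_{k=1}^{j}\alpha_{q(k)}/f>\beta_{q(j)}$, reset $q(i^* )\gets0$. The output $\mathbf{s}'$ is the sequence of nonzero entries of $\mathbf{q}$ in order, of length $P$. *)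

theory Defs
  imports Main "HOL.Real"
begin

text \<open>Tasks are numbered 1..N; an ordered set is a list of distinct tasks.
  Positions in lists are 0-indexed: the task at list position l completes at
  (sum of alpha over positions 0..l) / f.\<close>

definition ordered_set :: "nat \<Rightarrow> nat list \<Rightarrow> bool" where
  "ordered_set N s \<longleftrightarrow> distinct s \<and> set s \<subseteq> {1..N}"

definition completion_time :: "(nat \<Rightarrow> real) \<Rightarrow> real \<Rightarrow> nat list \<Rightarrow> nat \<Rightarrow> real" where
  "completion_time alpha f s l = sum_list (map alpha (take (Suc l) s)) / f"

definition no_outage :: "(nat \<Rightarrow> real) \<Rightarrow> (nat \<Rightarrow> real) \<Rightarrow> real \<Rightarrow> nat list \<Rightarrow> bool" where
  "no_outage alpha beta f s \<longleftrightarrow> (\<forall>l < length s. completion_time alpha f s l \<le> beta (s ! l))"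

definition optimal_ordered_set ::
  "nat \<Rightarrow> (nat \<Rightarrow> real) \<Rightarrow> (nat \<Rightarrow> real) \<Rightarrow> real \<Rightarrow> nat list \<Rightarrow> bool" where
  "optimal_ordered_set N alpha beta f s \<longleftrightarrow>
     ordered_set N s \<and> no_outage alpha beta f s \<and>
     (\<forall>t. ordered_set N t \<and> no_outage alpha beta f t \<longrightarrow> length t \<le> length s)"

text \<open>Slot weight: entry 0 is an empty slot with alpha_0 = 0.\<close>
definition slot_alpha :: "(nat \<Rightarrow> real) \<Rightarrow> nat \<Rightarrow> real" where
  "slot_alpha alpha x = (if x = 0 then 0 else alpha x)"

definition ojs_step ::
  "(nat \<Rightarrow> real) \<Rightarrow> (nat \<Rightarrow> real) \<Rightarrow> real \<Rightarrow> nat list \<Rightarrow> nat list \<Rightarrow> nat \<Rightarrow> nat list" where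
  "ojs_step alpha beta f b q ci =
     (let istar = (THE i. i < length b \<and> b ! i = ci);
          q' = q[istar := b ! istar]
      in if (\<exists>j. istar \<le> j \<and> j < length q' \<and> q' ! j \<noteq> 0 \<and>
                 sum_list (map (slot_alpha alpha) (take (Suc j) q')) / f > beta (q' ! j))
         then q'[istar := 0] else q')"

definition ojs ::
  "(nat \<Rightarrow> real) \<Rightarrow> (nat \<Rightarrow> real) \<Rightarrow> real \<Rightarrow> nat list \<Rightarrow> nat list \<Rightarrow> nat list" where
  "ojs alpha beta f c b =
     filter (\<lambda>x. x \<noteq> 0) (foldl (ojs_step alpha beta f b) (replicate (length b) 0) c)"

definition c_order :: "(nat \<Rightarrow> real) \<Rightarrow> (nat \<Rightarrow> real) \<Rightarrow> nat \<Rightarrow> nat \<Rightarrow> bool" where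
  "c_order alpha beta x y \<longleftrightarrow> alpha x < alpha y \<or> (alpha x = alpha y \<and> beta x \<ge> beta y)"

definition b_order :: "(nat \<Rightarrow> real) \<Rightarrow> (nat \<Rightarrow> real) \<Rightarrow> nat \<Rightarrow> nat \<Rightarrow> bool" where
  "b_order alpha beta x y \<longleftrightarrow> beta x < beta y \<or> (beta x = beta y \<and> alpha x \<le> alpha y)"

end

theory Submission imports Defs begin

definition LL :: "(nat\<Rightarrow>real) \<Rightarrow> (nat\<Rightarrow>real) \<Rightarrow> nat set \<Rightarrow> real \<Rightarrow> real" where
  "LL al be S d = sum al {k\<in>S. be k \<le> d}"
definition FF :: "(nat\<Rightarrow>real) \<Rightarrow> (nat\<Rightarrow>real) \<Rightarrow> real \<Rightarrow> nat set \<Rightarrow> bool" where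
  "FF al be f S \<longleftrightarrow> (\<forall>j\<in>S. LL al be S (be j) \<le> f * be j)"
definition goodq :: "(nat\<Rightarrow>real) \<Rightarrow> (nat\<Rightarrow>real) \<Rightarrow> real \<Rightarrow> nat list \<Rightarrow> bool" where
  "goodq al be f t \<longleftrightarrow> (\<forall>j<length t. t!j \<noteq> 0 \<longrightarrow>
      sum_list (map (slot_alpha al) (take (Suc j) t)) \<le> f * be (t!j))"

lemma sum_list_filter0:
  "sum_list (map (slot_alpha al) xs) = sum_list (map (slot_alpha al) (filter (\<lambda>x. x\<noteq>0) xs))"
  by (induction xs) (auto simp: slot_alpha_def)

lemma distinct_filter_take:
  assumes "distinct (filter P t)" shows "distinct (filter P (take n t))"
proof -
  have "filter P t = filter P (take n t) @ filter P (drop n t)"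
    by (metis append_take_drop_id filter_append)
  with assms show ?thesis by (metis distinct_append)
qed

lemma sum_take:
  assumes "distinct (filter (\<lambda>x. x\<noteq>0) t)"
  shows "sum_list (map (slot_alpha al) (take n t)) = sum al (set (take n t) - {0})"
proof -
  have d: "distinct (filter (\<lambda>x. x\<noteq>0) (take n t))" using distinct_filter_take[OF assms] .
  have "sum_list (map (slot_alpha al) (take n t)) = sum_list (map (slot_alpha al) (filter (\<lambda>x. x\<noteq>0) (take n t)))"
    by (rule sum_list_filter0)
  also have "\<dots> = sum (slot_alpha al) (set (filter (\<lambda>x. x\<noteq>0) (take n t)))"
    using d by (rule sum_list_distinct_conv_sum_set)
  also have "set (filter (\<lambda>x. x\<noteq>0) (take n t)) = set (take n t) - {0}" by auto
  also have "sum (slot_alpha al) (set (take n t) - {0}) = sum al (set (take n t) - {0})"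
    by (rule sum.cong) (auto simp: slot_alpha_def)
  finally show ?thesis .
qed

lemma LL_gen:
  assumes "FF al be f S" "finite S" "m \<in> S" "be m \<le> d" "f > 0"
  shows "LL al be S d \<le> f * d"
proof -
  let ?A = "{k\<in>S. be k \<le> d}"
  have fin: "finite ?A" using assms by auto
  have ne: "?A \<noteq> {}" using assms by auto
  obtain x where x: "x \<in> ?A" "\<forall>y\<in>?A. be y \<le> be x"
  proof -
    have "Max (be ` ?A) \<in> be ` ?A" using fin ne by (intro Max_in) auto
    then obtain x where "x \<in> ?A" "be x = Max (be ` ?A)" by auto
    moreover have "\<forall>y\<in>?A. be y \<le> Max (be ` ?A)" using fin by auto
    ultimately show ?thesis using that by metis
  qed
  have eq: "?A = {k\<in>S. be k \<le> be x}" using x by auto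
  have "LL al be S d = LL al be S (be x)" unfolding LL_def using eq by simp
  also have "\<dots> \<le> f * be x" using assms(1) x unfolding FF_def by auto
  also have "\<dots> \<le> f * d" using x assms by auto
  finally show ?thesis .
qed

lemma FF_mono:
  assumes "FF al be f S" "finite S" "T \<subseteq> S" "\<forall>x\<in>S. al x \<ge> 0"
  shows "FF al be f T"
  unfolding FF_def
proof
  fix j assume j: "j \<in> T"
  have "LL al be T (be j) \<le> LL al be S (be j)" unfolding LL_def
    by (rule sum_mono2) (use assms in auto)
  also have "\<dots> \<le> f * be j" using assms j unfolding FF_def by auto
  finally show "LL al be T (be j) \<le> f * be j" .
qed

lemma C0:
  assumes dist: "distinct (filter (\<lambda>x. x\<noteq>0) t)" and g: "goodq al be f t"
    and nn: "\<forall>x\<in>set t - {0}. al x \<ge> 0" and fpos: "f > 0"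
  shows "FF al be f (set t - {0})"
  unfolding FF_def
proof
  fix x assume x: "x \<in> set t - {0}"
  define I where "I = {i. i < length t \<and> t!i \<noteq> 0 \<and> be (t!i) \<le> be x}"
  obtain i0 where i0: "i0 < length t" "t!i0 = x" using x by (auto simp: in_set_conv_nth)
  have "i0 \<in> I" using i0 x unfolding I_def by auto
  have finI: "finite I" unfolding I_def by auto
  define l where "l = Max I"
  have lI: "l \<in> I" unfolding l_def using finI \<open>i0 \<in> I\<close> by (intro Max_in) auto
  have sub: "{k\<in>set t - {0}. be k \<le> be x} \<subseteq> set (take (Suc l) t) - {0}"
  proof
    fix k assume k: "k \<in> {k\<in>set t - {0}. be k \<le> be x}"
    then obtain i where i: "i < length t" "t!i = k" by (auto simp: in_set_conv_nth)
    have "i \<in> I" using i k unfolding I_def by auto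
    hence "i \<le> l" unfolding l_def using finI by auto
    hence il: "i < length (take (Suc l) t)" "take (Suc l) t ! i = t ! i" using i by auto
    hence "k \<in> set (take (Suc l) t)" using i(2) nth_mem by metis
    thus "k \<in> set (take (Suc l) t) - {0}" using k by auto
  qed
  have "LL al be (set t - {0}) (be x) = sum al {k\<in>set t - {0}. be k \<le> be x}"
    unfolding LL_def ..
  also have "\<dots> \<le> sum al (set (take (Suc l) t) - {0})"
    by (rule sum_mono2) (use sub nn in \<open>auto dest: in_set_takeD\<close>)
  also have "\<dots> = sum_list (map (slot_alpha al) (take (Suc l) t))"
    using sum_take[OF dist] by simp
  also have "\<dots> \<le> f * be (t!l)" using g lI unfolding goodq_def I_def by auto
  also have "\<dots> \<le> f * be x" using lI fpos unfolding I_def by auto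
  finally show "LL al be (set t - {0}) (be x) \<le> f * be x" .
qed

lemma D0:
  assumes dist: "distinct (filter (\<lambda>x. x\<noteq>0) t)"
    and srt: "sorted_wrt (\<lambda>x y. x \<noteq> 0 \<longrightarrow> y \<noteq> 0 \<longrightarrow> be x \<le> be y) t"
    and F: "FF al be f (set t - {0})"
    and nn: "\<forall>x\<in>set t - {0}. al x \<ge> 0"
  shows "goodq al be f t"
  unfolding goodq_def
proof (intro allI impI)
  fix j assume j: "j < length t" "t!j \<noteq> 0"
  have sub: "set (take (Suc j) t) - {0} \<subseteq> {k\<in>set t - {0}. be k \<le> be (t!j)}"
  proof
    fix k assume k: "k \<in> set (take (Suc j) t) - {0}"
    then obtain i where i: "i < length (take (Suc j) t)" "take (Suc j) t ! i = k"
      by (auto simp: in_set_conv_nth)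
    have ij: "i \<le> j" "i < length t" using i j by auto
    have tk: "t!i = k" using i by auto
    have "be k \<le> be (t!j)"
    proof (cases "i = j")
      case True thus ?thesis using tk by simp
    next
      case False
      hence "i < j" using ij by simp
      thus ?thesis using srt j k tk unfolding sorted_wrt_iff_nth_less by auto
    qed
    moreover have "k \<in> set t" using tk ij by auto
    ultimately show "k \<in> {k\<in>set t - {0}. be k \<le> be (t!j)}" using k by auto
  qed
  have "sum_list (map (slot_alpha al) (take (Suc j) t)) = sum al (set (take (Suc j) t) - {0})"
    using sum_take[OF dist] .
  also have "\<dots> \<le> sum al {k\<in>set t - {0}. be k \<le> be (t!j)}"
    by (rule sum_mono2) (use sub nn in auto)
  also have "\<dots> \<le> f * be (t!j)" using F j unfolding FF_def LL_def by auto
  finally show "sum_list (map (slot_alpha al) (take (Suc j) t)) \<le> f * be (t!j)" .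
qed

lemma goodq_no_outage:
  assumes "0 \<notin> set t" "f > 0"
  shows "no_outage al be f t \<longleftrightarrow> goodq al be f t"
proof -
  have m: "\<And>j. map (slot_alpha al) (take j t) = map al (take j t)"
    using assms(1) by (intro map_cong refl) (auto simp: slot_alpha_def dest: in_set_takeD)
  have nz: "\<And>j. j < length t \<Longrightarrow> t!j \<noteq> 0" using assms(1) nth_mem by metis
  have e: "\<And>x y. (x / f \<le> y) \<longleftrightarrow> (x \<le> f * y)" using assms(2)
    by (simp add: pos_divide_le_eq mult.commute)
  show ?thesis
    unfolding no_outage_def goodq_def completion_time_def m e using nz by blast
qed

definition gS :: "nat set \<Rightarrow> nat \<Rightarrow> nat" where "gS S x = (if x \<in> S then x else 0)"

lemma filter_gS: "0 \<notin> set b \<Longrightarrow> filter (\<lambda>x. x\<noteq>0) (map (gS S) b) = filter (\<lambda>x. x \<in> S) b"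
  by (induction b) (auto simp: gS_def)

lemma set_gS: "0 \<notin> set b \<Longrightarrow> set (map (gS S) b) - {0} = S \<inter> set b"
  by (auto simp: gS_def)

lemma sorted_gS:
  assumes "sorted_wrt (\<lambda>x y. be x \<le> be y) b"
  shows "sorted_wrt (\<lambda>x y. x \<noteq> 0 \<longrightarrow> y \<noteq> 0 \<longrightarrow> be x \<le> be y) (map (gS S) b)"
  unfolding sorted_wrt_map
  by (rule sorted_wrt_mono_rel[OF _ assms]) (auto simp: gS_def)

lemma step_lemma:
  assumes db: "distinct b" and b0: "0 \<notin> set b" and bs: "sorted_wrt (\<lambda>x y. be x \<le> be y) b"
    and nn: "\<forall>x\<in>set b. al x \<ge> 0" and fpos: "f > 0"
    and Sb: "S \<subseteq> set b" and FS: "FF al be f S" and cb: "c \<in> set b" and cS: "c \<notin> S"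
  shows "ojs_step al be f b (map (gS S) b) c =
         map (gS (if FF al be f (insert c S) then insert c S else S)) b"
proof -
  obtain i where i: "i < length b" "b!i = c" using cb by (auto simp: in_set_conv_nth)
  have istar: "(THE i. i < length b \<and> b ! i = c) = i"
    using i db by (auto intro!: the_equality simp: nth_eq_iff_index_eq)
  define q where "q = map (gS S) b"
  define q' where "q' = q[i := b ! i]"
  have q'eq: "q' = map (gS (insert c S)) b"
    unfolding q'_def q_def using i db
    by (intro nth_equalityI) (auto simp: gS_def nth_list_update nth_eq_iff_index_eq)
  have qback: "q'[i := 0] = q"
    unfolding q'_def q_def using i cS
    by (intro nth_equalityI) (auto simp: gS_def nth_list_update)
  have distq: "\<And>T. distinct (filter (\<lambda>x. x\<noteq>0) (map (gS T) b))"
    using filter_gS[OF b0] db by simp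
  have nnq: "\<And>T. \<forall>x\<in>set (map (gS T) b) - {0}. al x \<ge> 0" using nn set_gS[OF b0] by auto
  have Sb': "insert c S \<subseteq> set b" using Sb cb by auto
  have "set q - {0} = S" using set_gS[OF b0] Sb unfolding q_def by auto
  hence goodq: "goodq al be f q" unfolding q_def
    using D0[OF distq sorted_gS[OF bs] _ nnq] FS by metis
  define bad where "bad = (\<exists>j. i \<le> j \<and> j < length q' \<and> q' ! j \<noteq> 0 \<and>
                 sum_list (map (slot_alpha al) (take (Suc j) q')) / f > be (q' ! j))"
  have badiff: "bad \<longleftrightarrow> \<not> FF al be f (insert c S)"
  proof
    assume bad
    then obtain j where j: "j < length q'" "q' ! j \<noteq> 0"
        "sum_list (map (slot_alpha al) (take (Suc j) q')) / f > be (q' ! j)"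
      unfolding bad_def by auto
    hence "\<not> goodq al be f q'" unfolding goodq_def using fpos
      by (auto simp: pos_less_divide_eq mult.commute)
    have "set q' - {0} = insert c S" using q'eq set_gS[OF b0] Sb' by auto
    moreover have "FF al be f (set q' - {0}) \<Longrightarrow> goodq al be f q'"
      unfolding q'eq by (rule D0[OF distq sorted_gS[OF bs] _ nnq])
    ultimately show "\<not> FF al be f (insert c S)" using \<open>\<not> goodq al be f q'\<close> by auto
  next
    assume nF: "\<not> FF al be f (insert c S)"
    show bad
    proof (rule ccontr)
    assume "\<not> bad"
    have "goodq al be f q'"
      unfolding goodq_def
    proof (intro allI impI)
      fix j assume j: "j < length q'" "q'!j \<noteq> 0"
      show "sum_list (map (slot_alpha al) (take (Suc j) q')) \<le> f * be (q'!j)"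
      proof (cases "j < i")
        case True
        have "take (Suc j) q' = take (Suc j) q" unfolding q'_def using True by simp
        moreover have "q'!j = q!j" unfolding q'_def using True by simp
        ultimately show ?thesis using goodq j unfolding goodq_def q'_def by auto
      next
        case False
        hence "\<not> (sum_list (map (slot_alpha al) (take (Suc j) q')) / f > be (q' ! j))"
          using \<open>\<not> bad\<close> j unfolding bad_def by auto
        hence "sum_list (map (slot_alpha al) (take (Suc j) q')) / f \<le> be (q' ! j)" by simp
        thus ?thesis using fpos by (simp add: pos_divide_le_eq mult.commute)
      qed
    qed
    hence "FF al be f (set q' - {0})" unfolding q'eq by (rule C0[OF distq _ nnq fpos])
    moreover have "set q' - {0} = insert c S" using q'eq set_gS[OF b0] Sb' by auto
    ultimately have "FF al be f (insert c S)" by simp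
    with nF show False by simp
  qed
  qed
  have st: "ojs_step al be f b q c = (if bad then q'[i := 0] else q')"
    unfolding ojs_step_def Let_def istar bad_def q'_def by (rule refl)
  show ?thesis using st qback badiff by (simp add: q'eq q_def[symmetric])
qed

lemma main_ind:
  assumes db: "distinct b" and b0: "0 \<notin> set b" and bs: "sorted_wrt (\<lambda>x y. be x \<le> be y) b"
    and nn: "\<forall>x\<in>set b. al x \<ge> 0" and fpos: "f > 0"
    and maxM: "\<forall>U. U \<subseteq> set b \<longrightarrow> FF al be f U \<longrightarrow> card U \<le> M"
  shows "distinct cs \<Longrightarrow> set cs \<subseteq> set b \<Longrightarrow> sorted_wrt (\<lambda>x y. al x \<le> al y) cs \<Longrightarrow>
    S \<subseteq> set b \<Longrightarrow> S \<inter> set cs = {} \<Longrightarrow> FF al be f S \<Longrightarrow>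
    T \<subseteq> set b \<Longrightarrow> FF al be f T \<Longrightarrow> card T = M \<Longrightarrow> T \<inter> (set b - set cs) = S \<Longrightarrow>
    \<exists>S'. foldl (ojs_step al be f b) (map (gS S) b) cs = map (gS S') b \<and> FF al be f S'
      \<and> S' \<subseteq> set b \<and> card S' = M"
proof (induction cs arbitrary: S T)
  case Nil
  hence "T = S" by auto
  thus ?case using Nil by auto
next
  case (Cons c cs)
  have cb: "c \<in> set b" and cS: "c \<notin> S" and ccs: "c \<notin> set cs" using Cons.prems by auto
  have finb: "finite (set b)" by simp
  have finT: "finite T" using Cons.prems(7) finite_subset by blast
  define S1 where "S1 = (if FF al be f (insert c S) then insert c S else S)"
  have step: "ojs_step al be f b (map (gS S) b) c = map (gS S1) b"
    unfolding S1_def using step_lemma[OF db b0 bs nn fpos Cons.prems(4) Cons.prems(6) cb cS] .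
  have FS1: "FF al be f S1" unfolding S1_def using Cons.prems(6) by auto
  have S1b: "S1 \<subseteq> set b" unfolding S1_def using Cons.prems(4) cb by auto
  have S1cs: "S1 \<inter> set cs = {}" unfolding S1_def using Cons.prems(5) ccs by auto
  have srt: "sorted_wrt (\<lambda>x y. al x \<le> al y) cs" using Cons.prems(3) by simp
  have TS: "T = S \<union> (T \<inter> set (c # cs))" using Cons.prems(7,10) by auto
  have "\<exists>T1. T1 \<subseteq> set b \<and> FF al be f T1 \<and> card T1 = M \<and> T1 \<inter> (set b - set cs) = S1"
  proof (cases "FF al be f (insert c S)")
    case False
    have "c \<notin> T"
    proof
      assume "c \<in> T"
      hence "insert c S \<subseteq> T" using Cons.prems(10) by auto
      hence "FF al be f (insert c S)"
        using FF_mono[OF Cons.prems(8) finT] nn Cons.prems(7) by blast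
      with False show False by simp
    qed
    hence "T \<inter> (set b - set cs) = S1" unfolding S1_def using False Cons.prems(10) by auto
    thus ?thesis using Cons.prems by blast
  next
    case True
    show ?thesis
    proof (cases "c \<in> T")
      case True
      hence "T \<inter> (set b - set cs) = S1" unfolding S1_def
        using \<open>FF al be f (insert c S)\<close> Cons.prems(10) cb ccs by auto
      thus ?thesis using Cons.prems by blast
    next
      case False
      define R where "R = T \<inter> set cs"
      have TSR: "T = S \<union> R" using TS False unfolding R_def by auto
      have finR: "finite R" unfolding R_def by simp
      have Rne: "R \<noteq> {}"
      proof
        assume "R = {}"
        hence "T = S" using TSR by auto
        hence "FF al be f (insert c T)" "insert c T \<subseteq> set b" using True cb Cons.prems(4) by auto
        hence "card (insert c T) \<le> M" using maxM by blast
        moreover have "card (insert c T) = Suc M" using False finT Cons.prems(9) by simp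
        ultimately show False by simp
      qed
      obtain e where e: "e \<in> R" "\<forall>y\<in>R. be e \<le> be y"
      proof -
        have "Min (be ` R) \<in> be ` R" using finR Rne by (intro Min_in) auto
        then obtain x where "x \<in> R" "be x = Min (be ` R)" by auto
        moreover have "\<forall>y\<in>R. Min (be ` R) \<le> be y" using finR by auto
        ultimately show ?thesis using that by metis
      qed
      have eT: "e \<in> T" "e \<in> set cs" using e unfolding R_def by auto
      have ace: "al c \<le> al e" using Cons.prems(3) eT by simp
      have ec: "e \<noteq> c" using eT ccs by auto
      define T1 where "T1 = insert c (T - {e})"
      have T1b: "T1 \<subseteq> set b" unfolding T1_def using Cons.prems(7) cb by auto
      have finT1: "finite T1" unfolding T1_def using finT by simp
      have cardT1: "card T1 = M"
      proof -
        have "card (T - {e}) = M - 1" using eT Cons.prems(9) finT by simp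
        moreover have "M \<ge> 1" proof -
          have "card T > 0" using eT finT card_gt_0_iff by blast
          thus ?thesis using Cons.prems(9) by simp
        qed
        ultimately show ?thesis unfolding T1_def using False finT by simp
      qed
      have T1int: "T1 \<inter> (set b - set cs) = S1"
        unfolding T1_def S1_def using \<open>FF al be f (insert c S)\<close> Cons.prems(10) cb ccs eT
        by auto
      have FT1: "FF al be f T1"
        unfolding FF_def
      proof
        fix j assume j: "j \<in> T1"
        show "LL al be T1 (be j) \<le> f * be j"
        proof (cases "be j < be e")
          case True
          have eS: "e \<notin> S" using Cons.prems(5) eT by auto
          have key: "\<And>k. k \<in> T1 \<Longrightarrow> be k < be e \<Longrightarrow> k \<in> insert c S"
          proof -
            fix k assume k: "k \<in> T1" "be k < be e"
            show "k \<in> insert c S"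
            proof (rule ccontr)
              assume "k \<notin> insert c S"
              hence "k \<in> R" using k(1) TSR unfolding T1_def by auto
              hence "be e \<le> be k" using e by auto
              thus False using k(2) by simp
            qed
          qed
          have jin: "j \<in> insert c S" using key[OF j True] .
          have eq: "{k\<in>T1. be k \<le> be j} = {k\<in>insert c S. be k \<le> be j}"
          proof
            show "{k\<in>T1. be k \<le> be j} \<subseteq> {k\<in>insert c S. be k \<le> be j}"
              using key True by force
            show "{k\<in>insert c S. be k \<le> be j} \<subseteq> {k\<in>T1. be k \<le> be j}"
              using eS TSR unfolding T1_def by auto
          qed
          have "LL al be T1 (be j) = LL al be (insert c S) (be j)" unfolding LL_def eq ..
          also have "\<dots> \<le> f * be j" using \<open>FF al be f (insert c S)\<close> jin unfolding FF_def by auto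
          finally show ?thesis .
        next
          case False
          hence ej: "be e \<le> be j" by simp
          let ?A = "{k\<in>T. be k \<le> be j}"
          have finA: "finite ?A" using finT by simp
          have eA: "e \<in> ?A" using eT ej by simp
          have cA: "c \<notin> ?A" using \<open>c \<notin> T\<close> by simp
          have sub: "{k\<in>T1. be k \<le> be j} \<subseteq> insert c (?A - {e})" unfolding T1_def by auto
          have "LL al be T1 (be j) \<le> sum al (insert c (?A - {e}))"
            unfolding LL_def
            by (rule sum_mono2) (use sub finA nn Cons.prems(7) cb in auto)
          also have "\<dots> = al c + sum al (?A - {e})"
            using finA cA by (intro sum.insert) auto
          also have "\<dots> = al c + (sum al ?A - al e)"
            using finA eA by (simp add: sum_diff1)
          also have "\<dots> \<le> sum al ?A" using ace by simp
          also have "\<dots> \<le> f * be j"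
            using LL_gen[OF Cons.prems(8) finT eT(1) ej fpos] unfolding LL_def .
          finally show ?thesis .
        qed
      qed
      show ?thesis using T1b FT1 cardT1 T1int by blast
    qed
  qed
  then obtain T1 where T1: "T1 \<subseteq> set b" "FF al be f T1" "card T1 = M" "T1 \<inter> (set b - set cs) = S1"
    by blast
  have "distinct cs" "set cs \<subseteq> set b" using Cons.prems by auto
  from Cons.IH[OF this srt S1b S1cs FS1 T1] step show ?case by simp
qed

lemma listof:
  assumes b0: "0 \<notin> set b" and db: "distinct b" and bs: "sorted_wrt (\<lambda>x y. be x \<le> be y) b"
    and nn: "\<forall>x\<in>set b. al x \<ge> 0" and fpos: "f > 0" and bN: "set b = {1..N}"
    and Ub: "U \<subseteq> set b" and FU: "FF al be f U"
  shows "ordered_set N (filter (\<lambda>x. x \<in> U) b) \<and> no_outage al be f (filter (\<lambda>x. x \<in> U) b)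
    \<and> length (filter (\<lambda>x. x \<in> U) b) = card U"
proof -
  let ?xs = "filter (\<lambda>x. x \<in> U) b"
  have d: "distinct ?xs" using db by simp
  have st: "set ?xs = U" using Ub by auto
  have x0: "0 \<notin> set ?xs" using b0 by auto
  have ff: "filter (\<lambda>x. x\<noteq>0) ?xs = ?xs" using x0 by (intro filter_True) (metis)
  have s2: "sorted_wrt (\<lambda>x y. be x \<le> be y) ?xs" using bs by (simp add: sorted_wrt_filter)
  have s3: "sorted_wrt (\<lambda>x y. x \<noteq> 0 \<longrightarrow> y \<noteq> 0 \<longrightarrow> be x \<le> be y) ?xs"
    by (rule sorted_wrt_mono_rel[OF _ s2]) auto
  have d2: "distinct (filter (\<lambda>x. x\<noteq>0) ?xs)" using d ff by simp
  have F2: "FF al be f (set ?xs - {0})" using FU st x0 by simp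
  have n2: "\<forall>x\<in>set ?xs - {0}. al x \<ge> 0" using nn by auto
  have "goodq al be f ?xs" by (rule D0[OF d2 s3 F2 n2])
  hence "no_outage al be f ?xs" using goodq_no_outage[OF x0 fpos] by simp
  moreover have "ordered_set N ?xs" unfolding ordered_set_def using d st Ub bN by auto
  moreover have "length ?xs = card U" using distinct_card[OF d] st by simp
  ultimately show ?thesis by simp
qed

theorem lemma4:
  fixes N :: nat and f :: real and alpha beta :: "nat \<Rightarrow> real"
    and c b s :: "nat list"
  assumes f_pos: "f > 0"
    and alpha_pos: "\<forall>a\<in>{1..N}. alpha a > 0"
    and c_perm: "distinct c" "set c = {1..N}"
    and c_sorted: "sorted_wrt (c_order alpha beta) c"
    and b_perm: "distinct b" "set b = {1..N}"
    and b_sorted: "sorted_wrt (b_order alpha beta) b"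
    and s_opt: "optimal_ordered_set N alpha beta f s"
  shows "optimal_ordered_set N alpha beta f (ojs alpha beta f c b)
         \<and> length (ojs alpha beta f c b) = length s"
proof -
  have b0: "0 \<notin> set b" using b_perm by auto
  have bs: "sorted_wrt (\<lambda>x y. beta x \<le> beta y) b"
    by (rule sorted_wrt_mono_rel[OF _ b_sorted]) (auto simp: b_order_def)
  have cs: "sorted_wrt (\<lambda>x y. alpha x \<le> alpha y) c"
    by (rule sorted_wrt_mono_rel[OF _ c_sorted]) (auto simp: c_order_def)
  have nn: "\<forall>x\<in>set b. alpha x \<ge> 0" using alpha_pos b_perm by (simp add: less_imp_le)
  define M where "M = length s"
  have sord: "ordered_set N s" "no_outage alpha beta f s"
    and smax: "\<And>t. ordered_set N t \<Longrightarrow> no_outage alpha beta f t \<Longrightarrow> length t \<le> length s"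
    using s_opt unfolding optimal_ordered_set_def by auto
  have maxM: "\<forall>U. U \<subseteq> set b \<longrightarrow> FF alpha beta f U \<longrightarrow> card U \<le> M"
  proof (intro allI impI)
    fix U assume U: "U \<subseteq> set b" "FF alpha beta f U"
    from listof[OF b0 b_perm(1) bs nn f_pos b_perm(2) U] smax
    show "card U \<le> M" unfolding M_def by metis
  qed
  have s0: "0 \<notin> set s" and sb: "set s \<subseteq> set b" and ds: "distinct s"
    using sord(1) b_perm unfolding ordered_set_def by auto
  have ffs: "filter (\<lambda>x. x\<noteq>0) s = s" using s0 by (intro filter_True) (metis)
  have gs: "goodq alpha beta f s" using goodq_no_outage[OF s0 f_pos] sord(2) by simp
  have Fs0: "FF alpha beta f (set s - {0})"
    by (rule C0) (use ffs ds gs nn sb f_pos in auto)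
  have Fs: "FF alpha beta f (set s)" using Fs0 s0 by simp
  have cards: "card (set s) = M" unfolding M_def using distinct_card[OF ds] .
  have "\<exists>S'. foldl (ojs_step alpha beta f b) (map (gS {}) b) c = map (gS S') b \<and> FF alpha beta f S'
      \<and> S' \<subseteq> set b \<and> card S' = M"
    by (rule main_ind[OF b_perm(1) b0 bs nn f_pos maxM c_perm(1) _ cs _ _ _ sb Fs cards])
       (use c_perm b_perm in \<open>auto simp: FF_def\<close>)
  then obtain S' where S': "foldl (ojs_step alpha beta f b) (map (gS {}) b) c = map (gS S') b"
    "FF alpha beta f S'" "S' \<subseteq> set b" "card S' = M" by blast
  have rep: "replicate (length b) 0 = map (gS {}) b" by (induction b) (auto simp: gS_def)
  have oj: "ojs alpha beta f c b = filter (\<lambda>x. x \<in> S') b"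
    unfolding ojs_def rep S'(1) using filter_gS[OF b0] .
  have L: "ordered_set N (ojs alpha beta f c b) \<and> no_outage alpha beta f (ojs alpha beta f c b)
    \<and> length (ojs alpha beta f c b) = M"
    using listof[OF b0 b_perm(1) bs nn f_pos b_perm(2) S'(3) S'(2)] S'(4) oj by simp
  show ?thesis unfolding optimal_ordered_set_def using L smax M_def by auto
qed

end
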